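(* Let $M(t)\in\mathbb{R}^{n\times n}$ be symmetric and satisfy $\dot M=-(M\Phi+\Phi M)$ with $\Phi(t)$ symmetric, and suppose $M(t)=\sum_e\lambda_e(t)E_e(t)$ with distinct eigenvalues $\lambda_e(t)$ and orthogonal spectral projectors $E_e(t)$ varying differentiably (ranks constant). Then for each $e$, $$\dot\lambda_e=-2\lambda_e\,\frac{\operatorname{tr}(E_e\Phi E_e)}{\dim(E_e)},$$ where $\dim(E_e)=\operatorname{tr}(E_e)$ is the rank of $E_e$. *)

theory Defs
  imports "HOL-Analysis.Analysis"
begin

end

theory Submission
  imports Defs
begin

lemma mm_bilinear: "bounded_bilinear ((**) :: real^'n^'n \<Rightarrow> real^'n^'n \<Rightarrow> real^'n^'n)"
proof -
  have "bilinear ((**) :: real^'n^'n \<Rightarrow> real^'n^'n \<Rightarrow> real^'n^'n)"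
    unfolding bilinear_def linear_iff
    by (auto simp: matrix_matrix_mult_def vec_eq_iff sum.distrib sum_distrib_left
         algebra_simps)
  then show ?thesis using bilinear_conv_bounded_bilinear by blast
qed

lemma trace_scaleR: "trace (c *\<^sub>R (A::real^'n^'n)) = c * trace A"
  by (simp add: trace_def sum_distrib_left)

lemma trace_neg: "trace (- (A::real^'n^'n)) = - trace A"
  by (simp add: trace_def sum_negf)

lemma trace_pos:
  fixes A :: "real^'n^'n"
  assumes "transpose A = A" "A ** A = A" "A \<noteq> 0"
  shows "trace A > 0"
proof -
  have eq: "trace A = (\<Sum>i\<in>UNIV. \<Sum>k\<in>UNIV. (A$i$k)^2)"
  proof -
    have "trace A = trace (A ** transpose A)" using assms by simp
    also have "\<dots> = (\<Sum>i\<in>UNIV. \<Sum>k\<in>UNIV. (A$i$k)^2)"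
      by (simp add: trace_def matrix_matrix_mult_def transpose_def power2_eq_square)
    finally show ?thesis .
  qed
  obtain i k where ik: "A$i$k \<noteq> 0" using assms(3) by (auto simp: vec_eq_iff)
  have "(A$i$k)^2 \<le> (\<Sum>k\<in>UNIV. (A$i$k)^2)"
    by (rule member_le_sum) auto
  also have "\<dots> \<le> (\<Sum>i\<in>UNIV. \<Sum>k\<in>UNIV. (A$i$k)^2)"
    by (rule member_le_sum[where f="\<lambda>i. \<Sum>k\<in>UNIV. (A$i$k)^2"]) (auto intro: sum_nonneg)
  finally show ?thesis using eq ik by (smt (verit) zero_less_power2)
qed
theorem corollary8:
  fixes M Phi :: "real \<Rightarrow> real^'n^'n"
    and lam :: "'k \<Rightarrow> real \<Rightarrow> real"
    and E :: "'k \<Rightarrow> real \<Rightarrow> real^'n^'n"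
    and K :: "'k set" and T :: "real set"
  assumes T_open: "open T"
    and K_fin: "finite K"
    and M_sym: "\<And>t. t \<in> T \<Longrightarrow> transpose (M t) = M t"
    and Phi_sym: "\<And>t. t \<in> T \<Longrightarrow> transpose (Phi t) = Phi t"
    and M_ode: "\<And>t. t \<in> T \<Longrightarrow>
        (M has_vector_derivative (- (M t ** Phi t + Phi t ** M t))) (at t)"
    and M_decomp: "\<And>t. t \<in> T \<Longrightarrow> M t = (\<Sum>e\<in>K. lam e t *\<^sub>R E e t)"
    and lam_distinct: "\<And>t. t \<in> T \<Longrightarrow> inj_on (\<lambda>e. lam e t) K"
    and E_sym: "\<And>e t. e \<in> K \<Longrightarrow> t \<in> T \<Longrightarrow> transpose (E e t) = E e t"
    and E_idem: "\<And>e t. e \<in> K \<Longrightarrow> t \<in> T \<Longrightarrow> E e t ** E e t = E e t"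
    and E_orth: "\<And>e e' t. e \<in> K \<Longrightarrow> e' \<in> K \<Longrightarrow> e \<noteq> e' \<Longrightarrow> t \<in> T \<Longrightarrow>
        E e t ** E e' t = 0"
    and E_sum: "\<And>t. t \<in> T \<Longrightarrow> (\<Sum>e\<in>K. E e t) = mat 1"
    and E_nonzero: "\<And>e t. e \<in> K \<Longrightarrow> t \<in> T \<Longrightarrow> E e t \<noteq> 0"
    and lam_diff: "\<And>e t. e \<in> K \<Longrightarrow> t \<in> T \<Longrightarrow> lam e differentiable (at t)"
    and E_diff: "\<And>e t. e \<in> K \<Longrightarrow> t \<in> T \<Longrightarrow> E e differentiable (at t)"
    and rank_const: "\<And>e t s. e \<in> K \<Longrightarrow> t \<in> T \<Longrightarrow> s \<in> T \<Longrightarrow>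
        rank (E e t) = rank (E e s)"
    and e_in: "e \<in> K" and t_in: "t \<in> T"
  shows "(lam e has_real_derivative
           (- 2 * lam e t * trace (E e t ** Phi t ** E e t) / trace (E e t))) (at t)"
proof -
  note bb = mm_bilinear[where 'n='n]
  define Ee where "Ee = E e t"
  define D where "D f = vector_derivative (E f) (at t)" for f
  define L where "L f = vector_derivative (lam f) (at t)" for f
  have dE: "(E f has_vector_derivative D f) (at t)" if "f \<in> K" for f
    unfolding D_def using E_diff[OF that t_in] by (rule vector_derivative_works[THEN iffD1])
  have dl: "(lam f has_real_derivative L f) (at t)" if "f \<in> K" for f
    unfolding L_def has_real_derivative_iff_has_vector_derivative
    using lam_diff[OF that t_in] by (rule vector_derivative_works[THEN iffD1])
  have dS: "((\<lambda>s. \<Sum>f\<in>K. lam f s *\<^sub>R E f s) has_vector_derivative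
      (\<Sum>f\<in>K. lam f t *\<^sub>R D f + L f *\<^sub>R E f t)) (at t)"
    by (rule has_vector_derivative_sum) (intro has_vector_derivative_scaleR dl dE; assumption)
  have dM: "(M has_vector_derivative (\<Sum>f\<in>K. lam f t *\<^sub>R D f + L f *\<^sub>R E f t)) (at t)"
    by (rule has_vector_derivative_transform_within_open[OF dS T_open t_in])
       (simp add: M_decomp)
  have Meq: "(\<Sum>f\<in>K. lam f t *\<^sub>R D f + L f *\<^sub>R E f t) = - (M t ** Phi t + Phi t ** M t)"
    using vector_derivative_unique_at[OF dM M_ode[OF t_in]] .
  have dP: "((\<lambda>s. E f s ** E g s) has_vector_derivative (E f t ** D g + D f ** E g t)) (at t)"
    if "f \<in> K" "g \<in> K" for f g
    using bounded_bilinear.has_vector_derivative[OF bb dE[OF that(1)] dE[OF that(2)]] .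
  have idem: "D f = E f t ** D f + D f ** E f t" if "f \<in> K" for f
  proof -
    have "(E f has_vector_derivative (E f t ** D f + D f ** E f t)) (at t)"
      by (rule has_vector_derivative_transform_within_open[OF dP[OF that that] T_open t_in])
         (simp add: E_idem that)
    from vector_derivative_unique_at[OF dE[OF that] this] show ?thesis .
  qed
  have orth: "E f t ** D g + D f ** E g t = 0" if "f \<in> K" "g \<in> K" "f \<noteq> g" for f g
  proof -
    have "((\<lambda>_. 0) has_vector_derivative (E f t ** D g + D f ** E g t)) (at t)"
      by (rule has_vector_derivative_transform_within_open[OF dP[OF that(1,2)] T_open t_in])
         (simp add: E_orth that)
    from vector_derivative_unique_at[OF this has_vector_derivative_const] show ?thesis .
  qed
  have EDE: "Ee ** D f ** Ee = 0" if "f \<in> K" for f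
  proof (cases "f = e")
    case True
    have "Ee ** D e = Ee ** (Ee ** D e + D e ** Ee)"
      using idem[OF e_in] Ee_def by simp
    also have "\<dots> = Ee ** D e + Ee ** D e ** Ee"
      by (simp add: matrix_add_ldistrib matrix_mul_assoc E_idem[OF e_in t_in] Ee_def)
    finally show ?thesis using True by simp
  next
    case False
    have "0 = (E e t ** D f + D e ** E f t) ** Ee"
      using orth[OF e_in that] False by simp
    also have "\<dots> = Ee ** D f ** Ee + D e ** (E f t ** E e t)"
      by (simp add: bounded_bilinear.add_left[OF bb] matrix_mul_assoc Ee_def)
    also have "\<dots> = Ee ** D f ** Ee"
      using E_orth[OF that e_in _ t_in] False by simp
    finally show ?thesis by simp
  qed
  have EEE: "Ee ** E f t ** Ee = (if f = e then Ee else 0)" if "f \<in> K" for f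
    using E_orth[OF e_in that _ t_in] E_idem[OF e_in t_in] by (auto simp: Ee_def)
  have lhs: "Ee ** (\<Sum>f\<in>K. lam f t *\<^sub>R D f + L f *\<^sub>R E f t) ** Ee = L e *\<^sub>R Ee"
  proof -
    have "Ee ** (\<Sum>f\<in>K. lam f t *\<^sub>R D f + L f *\<^sub>R E f t) ** Ee
        = (\<Sum>f\<in>K. Ee ** (lam f t *\<^sub>R D f + L f *\<^sub>R E f t) ** Ee)"
      by (simp add: bounded_bilinear.sum_left[OF bb] bounded_bilinear.sum_right[OF bb])
    also have "\<dots> = (\<Sum>f\<in>K. if f = e then L e *\<^sub>R Ee else 0)"
    proof (rule sum.cong[OF refl])
      fix f assume f: "f \<in> K"
      have "Ee ** (lam f t *\<^sub>R D f + L f *\<^sub>R E f t) ** Ee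
          = lam f t *\<^sub>R (Ee ** D f ** Ee) + L f *\<^sub>R (Ee ** E f t ** Ee)"
        by (simp add: matrix_add_ldistrib bounded_bilinear.add_left[OF bb] matrix_scalar_ac scalar_matrix_assoc)
      then show "Ee ** (lam f t *\<^sub>R D f + L f *\<^sub>R E f t) ** Ee = (if f = e then L e *\<^sub>R Ee else 0)"
        using EDE[OF f] EEE[OF f] by auto
    qed
    also have "\<dots> = L e *\<^sub>R Ee" using e_in K_fin by simp
    finally show ?thesis .
  qed
  have ME: "M t ** Ee = lam e t *\<^sub>R Ee" and EM: "Ee ** M t = lam e t *\<^sub>R Ee"
  proof -
    have "M t ** Ee = (\<Sum>f\<in>K. lam f t *\<^sub>R (E f t ** Ee))"
      by (simp add: M_decomp[OF t_in] bounded_bilinear.sum_left[OF bb] scalar_matrix_assoc)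
    also have "\<dots> = (\<Sum>f\<in>K. if f = e then lam e t *\<^sub>R Ee else 0)"
      by (rule sum.cong[OF refl]) (use E_orth[OF _ e_in _ t_in] E_idem[OF e_in t_in] in \<open>auto simp: Ee_def\<close>)
    also have "\<dots> = lam e t *\<^sub>R Ee" using e_in K_fin by simp
    finally show "M t ** Ee = lam e t *\<^sub>R Ee" .
    have "Ee ** M t = (\<Sum>f\<in>K. lam f t *\<^sub>R (Ee ** E f t))"
      by (simp add: M_decomp[OF t_in] bounded_bilinear.sum_right[OF bb] bounded_bilinear.scaleR_right[OF bb])
    also have "\<dots> = (\<Sum>f\<in>K. if f = e then lam e t *\<^sub>R Ee else 0)"
      by (rule sum.cong[OF refl]) (use E_orth[OF e_in _ _ t_in] E_idem[OF e_in t_in] in \<open>auto simp: Ee_def\<close>)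
    also have "\<dots> = lam e t *\<^sub>R Ee" using e_in K_fin by simp
    finally show "Ee ** M t = lam e t *\<^sub>R Ee" .
  qed
  have rhs: "Ee ** (- (M t ** Phi t + Phi t ** M t)) ** Ee = (- 2 * lam e t) *\<^sub>R (Ee ** Phi t ** Ee)"
  proof -
    have "Ee ** (- (M t ** Phi t + Phi t ** M t)) ** Ee
        = - ((Ee ** M t) ** Phi t ** Ee + Ee ** Phi t ** (M t ** Ee))"
      by (simp add: bounded_bilinear.minus_left[OF bb] bounded_bilinear.minus_right[OF bb] bounded_bilinear.diff_left[OF bb] bounded_bilinear.diff_right[OF bb]
          matrix_add_ldistrib bounded_bilinear.add_left[OF bb] matrix_mul_assoc)
    also have "\<dots> = (- 2 * lam e t) *\<^sub>R (Ee ** Phi t ** Ee)"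
    proof -
      have 1: "(lam e t *\<^sub>R Ee) ** Phi t ** Ee = lam e t *\<^sub>R (Ee ** Phi t ** Ee)"
        by (simp add: bounded_bilinear.scaleR_left[OF bb])
      have 2: "Ee ** Phi t ** (lam e t *\<^sub>R Ee) = lam e t *\<^sub>R (Ee ** Phi t ** Ee)"
        by (simp add: bounded_bilinear.scaleR_right[OF bb])
      have 3: "- (c *\<^sub>R X + c *\<^sub>R X) = (- 2 * c) *\<^sub>R (X::real^'n^'n)" for c X
        by (simp add: vec_eq_iff)
      show ?thesis by (simp only: ME EM 1 2 3)
    qed
    finally show ?thesis .
  qed
  have key: "L e *\<^sub>R Ee = (- 2 * lam e t) *\<^sub>R (Ee ** Phi t ** Ee)"
    using lhs rhs Meq by simp
  have tr: "L e * trace Ee = (- 2 * lam e t) * trace (Ee ** Phi t ** Ee)"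
    using arg_cong[OF key, of trace] by (simp add: trace_scaleR trace_neg)
  have pos: "trace Ee > 0"
    unfolding Ee_def by (rule trace_pos[OF E_sym[OF e_in t_in] E_idem[OF e_in t_in] E_nonzero[OF e_in t_in]])
  have "L e = - 2 * lam e t * trace (E e t ** Phi t ** E e t) / trace (E e t)"
    using tr pos by (simp add: Ee_def field_simps)
  then show ?thesis using dl[OF e_in] by simp
qed

end
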